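(* Let $P$ be a poset that is both directed and codirected, and let $M\colon P\to\mathbf{Vec}$ be pointwise finite-dimensional with $M_p\neq0$ for all $p\in P$ and with $M(p\le q)\colon M_p\to M_q$ surjective for all $p\le q$. Then $M$ has a direct summand isomorphic to $k_P$.
   Context: $P$ is directed if any two elements have a common upper bound in $P$, codirected if any two elements have a common lower bound in $P$. Persistence modules over $P$ are functors $P\to\mathbf{Vec}$ with structure maps $M(p\le q)$. $k_P$ is the module with $k$ at every point and identity structure maps. *)

theory Defs
  imports Main "HOL.Vector_Spaces"
begin

text \<open>A persistence module over (P,R) with values in vector spaces over the field 'k is
given by subspaces V p of an ambient k-vector space 'v (scalar multiplication sc),
together with structure maps f p q : V p \<rightarrow> V q for (p,q) \<in> R, which are linear, with
f p p = id and f q r \<circ> f p q = f p r (on V p).\<close>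

definition is_pmod ::
  "'p set \<Rightarrow> 'p rel \<Rightarrow> ('k::field \<Rightarrow> 'v::ab_group_add \<Rightarrow> 'v) \<Rightarrow> ('p \<Rightarrow> 'v set)
   \<Rightarrow> ('p \<Rightarrow> 'p \<Rightarrow> 'v \<Rightarrow> 'v) \<Rightarrow> bool" where
  "is_pmod P R sc V f \<longleftrightarrow>
     (\<forall>p\<in>P. module.subspace sc (V p)) \<and>
     (\<forall>p\<in>P. \<forall>q\<in>P. (p, q) \<in> R \<longrightarrow>
        (\<forall>x\<in>V p. f p q x \<in> V q) \<and>
        (\<forall>x\<in>V p. \<forall>y\<in>V p. f p q (x + y) = f p q x + f p q y) \<and>
        (\<forall>c. \<forall>x\<in>V p. f p q (sc c x) = sc c (f p q x))) \<and>
     (\<forall>p\<in>P. \<forall>x\<in>V p. f p p x = x) \<and>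
     (\<forall>p\<in>P. \<forall>q\<in>P. \<forall>r\<in>P. (p, q) \<in> R \<and> (q, r) \<in> R \<longrightarrow>
        (\<forall>x\<in>V p. f q r (f p q x) = f p r x))"

definition pfd :: "'p set \<Rightarrow> ('k::field \<Rightarrow> 'v::ab_group_add \<Rightarrow> 'v) \<Rightarrow> ('p \<Rightarrow> 'v set) \<Rightarrow> bool" where
  "pfd P sc V \<longleftrightarrow> (\<forall>p\<in>P. \<exists>B. finite B \<and> B \<subseteq> V p \<and> module.span sc B = V p)"

definition is_submod ::
  "'p set \<Rightarrow> 'p rel \<Rightarrow> ('k::field \<Rightarrow> 'v::ab_group_add \<Rightarrow> 'v) \<Rightarrow> ('p \<Rightarrow> 'v set)
   \<Rightarrow> ('p \<Rightarrow> 'p \<Rightarrow> 'v \<Rightarrow> 'v) \<Rightarrow> ('p \<Rightarrow> 'v set) \<Rightarrow> bool" where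
  "is_submod P R sc V f N \<longleftrightarrow>
     (\<forall>p\<in>P. module.subspace sc (N p) \<and> N p \<subseteq> V p) \<and>
     (\<forall>p\<in>P. \<forall>q\<in>P. (p, q) \<in> R \<longrightarrow> (\<forall>x\<in>N p. f p q x \<in> N q))"

definition pmod_iso ::
  "'p set \<Rightarrow> 'p rel \<Rightarrow> ('k::field \<Rightarrow> 'v::ab_group_add \<Rightarrow> 'v) \<Rightarrow> ('p \<Rightarrow> 'v set)
   \<Rightarrow> ('p \<Rightarrow> 'p \<Rightarrow> 'v \<Rightarrow> 'v) \<Rightarrow> ('k \<Rightarrow> 'w::ab_group_add \<Rightarrow> 'w) \<Rightarrow> ('p \<Rightarrow> 'w set)
   \<Rightarrow> ('p \<Rightarrow> 'p \<Rightarrow> 'w \<Rightarrow> 'w) \<Rightarrow> bool" where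
  "pmod_iso P R sc V f sc' W g \<longleftrightarrow>
     (\<exists>\<phi>. (\<forall>p\<in>P. bij_betw (\<phi> p) (V p) (W p) \<and>
              (\<forall>x\<in>V p. \<forall>y\<in>V p. \<phi> p (x + y) = \<phi> p x + \<phi> p y) \<and>
              (\<forall>c. \<forall>x\<in>V p. \<phi> p (sc c x) = sc' c (\<phi> p x))) \<and>
          (\<forall>p\<in>P. \<forall>q\<in>P. (p, q) \<in> R \<longrightarrow> (\<forall>x\<in>V p. \<phi> q (f p q x) = g p q (\<phi> p x))))"

definition kP_space :: "'p \<Rightarrow> 'k::field set" where "kP_space p = UNIV"
definition kP_map :: "'p \<Rightarrow> 'p \<Rightarrow> 'k::field \<Rightarrow> 'k" where "kP_map p q c = c"

definition has_kP_summand ::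
  "'p set \<Rightarrow> 'p rel \<Rightarrow> ('k::field \<Rightarrow> 'v::ab_group_add \<Rightarrow> 'v) \<Rightarrow> ('p \<Rightarrow> 'v set)
   \<Rightarrow> ('p \<Rightarrow> 'p \<Rightarrow> 'v \<Rightarrow> 'v) \<Rightarrow> bool" where
  "has_kP_summand P R sc V f \<longleftrightarrow>
     (\<exists>N C. is_submod P R sc V f N \<and> is_submod P R sc V f C \<and>
        (\<forall>p\<in>P. N p \<inter> C p = {0} \<and> V p = {x + y | x y. x \<in> N p \<and> y \<in> C p}) \<and>
        pmod_iso P R (*) kP_space kP_map sc N f)"

definition directed_on :: "'p set \<Rightarrow> 'p rel \<Rightarrow> bool" where
  "directed_on P R \<longleftrightarrow> (\<forall>p\<in>P. \<forall>q\<in>P. \<exists>r\<in>P. (p, r) \<in> R \<and> (q, r) \<in> R)"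

definition codirected_on :: "'p set \<Rightarrow> 'p rel \<Rightarrow> bool" where
  "codirected_on P R \<longleftrightarrow> (\<forall>p\<in>P. \<forall>q\<in>P. \<exists>r\<in>P. (r, p) \<in> R \<and> (r, q) \<in> R)"

end

theory Submission
  imports Defs
begin


context vector_space begin

definition aff :: "'b set \<Rightarrow> bool" where
  "aff S \<longleftrightarrow> (\<forall>x\<in>S. \<forall>y\<in>S. \<forall>z\<in>S. \<forall>c. x + c *s (y - z) \<in> S)"

definition dir :: "'b set \<Rightarrow> 'b set" where
  "dir S = {y - z | y z. y \<in> S \<and> z \<in> S}"

lemma dir_subspace: assumes "aff S" "S \<noteq> {}" shows "subspace (dir S)"
proof (rule subspaceI)
  obtain a where a: "a \<in> S" using assms by auto
  show "0 \<in> dir S" unfolding dir_def using a by (auto intro!: exI[of _ a])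
  fix x y assume "x \<in> dir S" "y \<in> dir S"
  then obtain y1 z1 y2 z2 where "x = y1 - z1" "y = y2 - z2" "y1\<in>S" "z1\<in>S" "y2\<in>S" "z2\<in>S"
    unfolding dir_def by auto
  moreover have "y1 + 1 *s (y2 - z2) \<in> S" using assms(1) calculation unfolding aff_def by blast
  ultimately show "x + y \<in> dir S" unfolding dir_def
    by (auto intro!: exI[of _ "y1 + 1 *s (y2 - z2)"] exI[of _ z1] simp: algebra_simps)
next
  fix c x assume "x \<in> dir S"
  then obtain y z where "x = y - z" "y\<in>S" "z\<in>S" unfolding dir_def by auto
  moreover have "z + c *s (y - z) \<in> S" using assms(1) calculation unfolding aff_def by blast
  moreover have "c *s x = (z + c *s (y - z)) - z" using calculation by simp
  ultimately show "c *s x \<in> dir S" unfolding dir_def by blast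
qed

lemma dir_mono: "S \<subseteq> T \<Longrightarrow> dir S \<subseteq> dir T"
  unfolding dir_def by blast

lemma dir_eq_sub: assumes "aff S" "S \<subseteq> T" "S \<noteq> {}" "dir S = dir T" shows "T \<subseteq> S"
proof
  fix t assume t: "t \<in> T"
  obtain a where a: "a \<in> S" using assms by auto
  have "t - a \<in> dir T" using t a assms(2) unfolding dir_def by blast
  hence "t - a \<in> dir S" using assms(4) by simp
  then obtain y z where "t - a = y - z" "y \<in> S" "z \<in> S" unfolding dir_def by blast
  moreover have "a + 1 *s (y - z) \<in> S" using assms(1) a calculation unfolding aff_def by blast
  ultimately have "a + (t - a) \<in> S" by simp
  thus "t \<in> S" by simp
qed

lemma dir_span: "S \<subseteq> span B \<Longrightarrow> dir S \<subseteq> span B"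
  unfolding dir_def using span_diff by blast

lemma dim_strict:
  assumes "finite B" "subspace A" "subspace C" "A \<subseteq> C" "C \<subseteq> span B" "A \<noteq> C"
  shows "dim A < dim C"
proof -
  obtain BA where BA: "BA \<subseteq> A" "independent BA" "A \<subseteq> span BA" "card BA = dim A"
    by (rule basis_exists)
  obtain c where c: "c \<in> C" "c \<notin> A" using assms by blast
  have "span BA \<subseteq> A" using BA(1) assms(2) span_minimal by blast
  hence "c \<notin> span BA" using c by blast
  hence ind: "independent (insert c BA)" using BA(2) independent_insertI by blast
  have "insert c BA \<subseteq> span B" using BA(1) c assms(4,5) by blast
  hence fin: "finite (insert c BA)" using independent_span_bound[OF assms(1) ind] by simp
  obtain BC where BC: "BC \<subseteq> C" "independent BC" "C \<subseteq> span BC" "card BC = dim C"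
    by (rule basis_exists)
  have "BC \<subseteq> span B" using BC(1) assms(5) by blast
  hence "finite BC" using independent_span_bound[OF assms(1) BC(2)] by simp
  have "insert c BA \<subseteq> span BC" using BA(1) c assms(4) BC(3) by blast
  hence "card (insert c BA) \<le> card BC" using independent_span_bound[OF \<open>finite BC\<close> ind] by simp
  moreover have "c \<notin> BA" using c BA(1) by blast
  moreover have "finite BA" using fin by simp
  ultimately have "Suc (card BA) \<le> card BC" by simp
  thus ?thesis using BA(4) BC(4) by simp
qed

lemma chain_inter:
  assumes "finite B" "\<C> \<noteq> {}" "\<forall>S\<in>\<C>. aff S \<and> S \<noteq> {} \<and> S \<subseteq> span B"
    "\<forall>S\<in>\<C>. \<forall>T\<in>\<C>. S \<subseteq> T \<or> T \<subseteq> S"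
  shows "\<Inter>\<C> \<noteq> {}"
proof -
  obtain S1 where "S1 \<in> \<C>" using assms by auto
  then obtain S0 where S0: "S0 \<in> \<C>" "\<forall>T. T \<in> \<C> \<longrightarrow> dim (dir S0) \<le> dim (dir T)"
    using ex_has_least_nat[of "\<lambda>S. S \<in> \<C>" S1 "\<lambda>S. dim (dir S)"] by blast
  have "S0 \<subseteq> T" if T: "T \<in> \<C>" for T
  proof (rule ccontr)
    assume "\<not> S0 \<subseteq> T"
    hence sub: "T \<subseteq> S0" "T \<noteq> S0" using assms(4) T S0(1) by auto
    show False
    proof (cases "dir T = dir S0")
      case True
      then show ?thesis using dir_eq_sub[of T S0] assms(3) T sub by auto
    next
      case False
      have d1: "subspace (dir T)" "subspace (dir S0)" using assms(3) T S0(1) dir_subspace by auto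
      have d2: "dir T \<subseteq> dir S0" using sub dir_mono by auto
      have d3: "dir S0 \<subseteq> span B" using assms(3) S0(1) dir_span by auto
      have "dim (dir T) < dim (dir S0)"
        using dim_strict[OF assms(1) d1 d2 d3] False by blast
      then show ?thesis using S0(2) T by force
    qed
  qed
  hence "S0 \<subseteq> \<Inter>\<C>" by blast
  thus ?thesis using assms(3) S0(1) by auto
qed

end



locale L = vector_space sc for sc :: "'k::field \<Rightarrow> 'v::ab_group_add \<Rightarrow> 'v" +
  fixes P :: "'p set" and R :: "'p rel" and V :: "'p \<Rightarrow> 'v set" and f :: "'p \<Rightarrow> 'p \<Rightarrow> 'v \<Rightarrow> 'v"
  assumes po: "partial_order_on P R"
    and dr: "directed_on P R" and cdr: "codirected_on P R"
    and pm: "is_pmod P R sc V f"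
    and pf: "pfd P sc V"
    and nz: "\<forall>p\<in>P. V p \<noteq> {0}"
    and su: "\<forall>p\<in>P. \<forall>q\<in>P. (p, q) \<in> R \<longrightarrow> f p q ` V p = V q"
begin

lemma RP: "(p,q) \<in> R \<Longrightarrow> p \<in> P" "(p,q) \<in> R \<Longrightarrow> q \<in> P"
  using partial_order_onD(4)[OF po] by auto

lemma Rrefl: "p \<in> P \<Longrightarrow> (p,p) \<in> R"
  using partial_order_onD(1)[OF po] unfolding refl_on_def by auto

lemma Rtrans: "(p,q) \<in> R \<Longrightarrow> (q,r) \<in> R \<Longrightarrow> (p,r) \<in> R"
  using partial_order_onD(2)[OF po] unfolding trans_def by blast

lemma up: "p \<in> P \<Longrightarrow> q \<in> P \<Longrightarrow> \<exists>r. (p,r) \<in> R \<and> (q,r) \<in> R"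
  using dr unfolding directed_on_def by blast

lemma down: "p \<in> P \<Longrightarrow> q \<in> P \<Longrightarrow> \<exists>r. (r,p) \<in> R \<and> (r,q) \<in> R"
  using cdr unfolding codirected_on_def by blast

lemma Vsub: "p \<in> P \<Longrightarrow> subspace (V p)"
  using pm unfolding is_pmod_def by blast

lemma V0: "p \<in> P \<Longrightarrow> 0 \<in> V p" using Vsub subspace_0 by blast
lemma Vadd: "p \<in> P \<Longrightarrow> x \<in> V p \<Longrightarrow> y \<in> V p \<Longrightarrow> x + y \<in> V p" using Vsub subspace_add by blast
lemma Vdiff: "p \<in> P \<Longrightarrow> x \<in> V p \<Longrightarrow> y \<in> V p \<Longrightarrow> x - y \<in> V p" using Vsub subspace_diff by blast
lemma Vsc: "p \<in> P \<Longrightarrow> x \<in> V p \<Longrightarrow> sc c x \<in> V p" using Vsub subspace_scale by blast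

lemma fV: "(p,q) \<in> R \<Longrightarrow> x \<in> V p \<Longrightarrow> f p q x \<in> V q"
  using pm RP unfolding is_pmod_def by blast
lemma fadd: "(p,q) \<in> R \<Longrightarrow> x \<in> V p \<Longrightarrow> y \<in> V p \<Longrightarrow> f p q (x + y) = f p q x + f p q y"
  using pm RP unfolding is_pmod_def by blast
lemma fsc: "(p,q) \<in> R \<Longrightarrow> x \<in> V p \<Longrightarrow> f p q (sc c x) = sc c (f p q x)"
  using pm RP unfolding is_pmod_def by blast
lemma fid: "p \<in> P \<Longrightarrow> x \<in> V p \<Longrightarrow> f p p x = x"
  using pm unfolding is_pmod_def by blast
lemma fcomp: "(p,q) \<in> R \<Longrightarrow> (q,r) \<in> R \<Longrightarrow> x \<in> V p \<Longrightarrow> f q r (f p q x) = f p r x"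
  using pm RP unfolding is_pmod_def by blast
lemma fsurj: "(p,q) \<in> R \<Longrightarrow> y \<in> V q \<Longrightarrow> \<exists>z\<in>V p. f p q z = y"
  using su RP by (metis imageE)

lemma f0: "(p,q) \<in> R \<Longrightarrow> f p q 0 = 0"
proof -
  assume a: "(p,q) \<in> R"
  have "f p q (0 + 0) = f p q 0 + f p q 0" using fadd[OF a] V0 RP a by blast
  thus ?thesis by simp
qed

lemma fdiff: "(p,q) \<in> R \<Longrightarrow> x \<in> V p \<Longrightarrow> y \<in> V p \<Longrightarrow> f p q (x - y) = f p q x - f p q y"
proof -
  assume a: "(p,q) \<in> R" "x \<in> V p" "y \<in> V p"
  have "f p q ((x - y) + y) = f p q (x - y) + f p q y" using fadd[OF a(1)] Vdiff RP a by blast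
  thus ?thesis by (simp add: algebra_simps)
qed

lemma flc: "(p,q) \<in> R \<Longrightarrow> x \<in> V p \<Longrightarrow> y \<in> V p \<Longrightarrow> z \<in> V p \<Longrightarrow>
  f p q (x + sc c (y - z)) = f p q x + sc c (f p q y - f p q z)"
  by (simp add: fadd fsc fdiff Vsc Vdiff RP)

lemma fin: "p \<in> P \<Longrightarrow> \<exists>B. finite B \<and> span B = V p"
  using pf unfolding pfd_def by blast

definition kf where "kf p q = {z \<in> V p. f p q z = 0}"

lemma kf_sub: "(p,q) \<in> R \<Longrightarrow> subspace (kf p q)"
  unfolding kf_def by (rule subspaceI) (auto simp: f0 V0 Vadd Vsc fadd fsc RP)

lemma kf_mono: "(p,q) \<in> R \<Longrightarrow> (q,s) \<in> R \<Longrightarrow> kf p q \<subseteq> kf p s"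
  unfolding kf_def using fcomp f0 by force

lemma exists_p0: assumes "pb \<in> P"
  shows "\<exists>p0\<in>P. \<forall>s. (p0,s) \<in> R \<longrightarrow> (\<forall>y\<in>V p0. f p0 s y = 0 \<longrightarrow> y = 0)"
proof -
  obtain B where B: "finite B" "span B = V pb" using fin assms by blast
  define D where "D = {dim (kf pb q) | q. (pb,q) \<in> R}"
  have Dle: "d \<le> card B" if "d \<in> D" for d
  proof -
    from that obtain q where "d = dim (kf pb q)" "(pb,q) \<in> R" unfolding D_def by blast
    moreover have "kf pb q \<subseteq> span B" using B unfolding kf_def by auto
    ultimately show ?thesis using dim_le_card B by blast
  qed
  have "finite D" using Dle by (meson finite_atMost finite_subset atMost_iff subsetI)
  moreover have "D \<noteq> {}" unfolding D_def using Rrefl assms by blast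
  ultimately have "Max D \<in> D" by simp
  then obtain qs where qs: "(pb,qs) \<in> R" "dim (kf pb qs) = Max D" unfolding D_def by auto
  have keq: "kf pb s = kf pb qs" if s: "(qs,s) \<in> R" for s
  proof (rule ccontr)
    assume ne: "kf pb s \<noteq> kf pb qs"
    have pbs: "(pb,s) \<in> R" using Rtrans qs(1) s by blast
    have "kf pb qs \<subseteq> kf pb s" using kf_mono qs(1) s by blast
    moreover have "kf pb s \<subseteq> span B" using B unfolding kf_def by auto
    ultimately have "dim (kf pb qs) < dim (kf pb s)"
      using dim_strict[OF B(1) kf_sub[OF qs(1)] kf_sub[OF pbs]] ne by blast
    moreover have "dim (kf pb s) \<in> D" unfolding D_def using pbs by blast
    ultimately show False using qs(2) \<open>finite D\<close> by (metis Max_ge leD)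
  qed
  have "\<forall>s. (qs,s) \<in> R \<longrightarrow> (\<forall>y\<in>V qs. f qs s y = 0 \<longrightarrow> y = 0)"
  proof (intro allI impI ballI)
    fix s y assume s: "(qs,s) \<in> R" and y: "y \<in> V qs" and fy: "f qs s y = 0"
    obtain z where z: "z \<in> V pb" "f pb qs z = y" using fsurj[OF qs(1) y] by blast
    have "f pb s z = 0" using fcomp[OF qs(1) s z(1)] z fy by simp
    hence "z \<in> kf pb s" using z unfolding kf_def by blast
    hence "z \<in> kf pb qs" using keq s by blast
    thus "y = 0" using z unfolding kf_def by blast
  qed
  thus ?thesis using qs(1) RP by blast
qed

end



locale L1 = L +
  fixes p0 and g and v
  assumes p0: "p0 \<in> P" and inj0: "\<forall>s. (p0,s) \<in> R \<longrightarrow> (\<forall>y\<in>V p0. f p0 s y = 0 \<longrightarrow> y = 0)"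
    and v: "v \<in> V p0" and gv: "g v = 1"
    and gadd: "\<And>x y. g (x + y) = g x + g y" and gsc: "\<And>c x. g (sc c x) = c * g x"
begin

lemma uniq:
  assumes "(r1,p0) \<in> R" "(r1,q) \<in> R" "z1 \<in> V r1" "(r2,p0) \<in> R" "(r2,q) \<in> R" "z2 \<in> V r2"
    "f r1 q z1 = f r2 q z2"
  shows "f r1 p0 z1 = f r2 p0 z2"
proof -
  obtain s where s: "(q,s) \<in> R" "(p0,s) \<in> R" using up[of q p0] RP assms(2) p0 by blast
  have "f r1 s z1 = f r2 s z2" using fcomp[OF assms(2) s(1) assms(3)] fcomp[OF assms(5) s(1) assms(6)] assms(7) by simp
  moreover have "f r1 s z1 = f p0 s (f r1 p0 z1)" using fcomp[OF assms(1) s(2) assms(3)] by simp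
  moreover have "f r2 s z2 = f p0 s (f r2 p0 z2)" using fcomp[OF assms(4) s(2) assms(6)] by simp
  ultimately have "f p0 s (f r1 p0 z1 - f r2 p0 z2) = 0"
    using fdiff[OF s(2)] fV assms by simp
  moreover have "f r1 p0 z1 - f r2 p0 z2 \<in> V p0" using Vdiff p0 fV assms by blast
  ultimately show ?thesis using inj0 s(2) by force
qed

definition psi where
  "psi q y = (THE w. \<exists>r z. (r,p0) \<in> R \<and> (r,q) \<in> R \<and> z \<in> V r \<and> f r q z = y \<and> w = f r p0 z)"

lemma psi_eq: assumes "(r,p0) \<in> R" "(r,q) \<in> R" "z \<in> V r" shows "psi q (f r q z) = f r p0 z"
  unfolding psi_def
proof (rule the_equality)
  show "\<exists>r' z'. (r',p0) \<in> R \<and> (r',q) \<in> R \<and> z' \<in> V r' \<and> f r' q z' = f r q z \<and> f r p0 z = f r' p0 z'"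
    using assms by blast
  fix w assume "\<exists>r' z'. (r',p0) \<in> R \<and> (r',q) \<in> R \<and> z' \<in> V r' \<and> f r' q z' = f r q z \<and> w = f r' p0 z'"
  then obtain r' z' where "(r',p0) \<in> R" "(r',q) \<in> R" "z' \<in> V r'" "f r' q z' = f r q z" "w = f r' p0 z'" by blast
  thus "w = f r p0 z" using uniq[of r' q z' r z] assms by simp
qed

lemma lift: assumes "q \<in> P" "y \<in> V q"
  obtains r z where "(r,p0) \<in> R" "(r,q) \<in> R" "z \<in> V r" "f r q z = y"
proof -
  obtain r where r: "(r,p0) \<in> R" "(r,q) \<in> R" using down[OF p0 assms(1)] by blast
  obtain z where "z \<in> V r" "f r q z = y" using fsurj[OF r(2) assms(2)] by blast
  thus ?thesis using that r by blast
qed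

lemma lift2: assumes "q \<in> P" "y1 \<in> V q" "y2 \<in> V q"
  obtains r z1 z2 where "(r,p0) \<in> R" "(r,q) \<in> R" "z1 \<in> V r" "f r q z1 = y1" "z2 \<in> V r" "f r q z2 = y2"
proof -
  obtain r where r: "(r,p0) \<in> R" "(r,q) \<in> R" using down[OF p0 assms(1)] by blast
  obtain z1 where "z1 \<in> V r" "f r q z1 = y1" using fsurj[OF r(2) assms(2)] by blast
  moreover obtain z2 where "z2 \<in> V r" "f r q z2 = y2" using fsurj[OF r(2) assms(3)] by blast
  ultimately show ?thesis using that r by blast
qed

lemma psi_V: "q \<in> P \<Longrightarrow> y \<in> V q \<Longrightarrow> psi q y \<in> V p0"
  by (metis lift psi_eq fV)

lemma psi_add: assumes "q \<in> P" "y1 \<in> V q" "y2 \<in> V q" shows "psi q (y1 + y2) = psi q y1 + psi q y2"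
proof -
  obtain r z1 z2 where r: "(r,p0) \<in> R" "(r,q) \<in> R" "z1 \<in> V r" "f r q z1 = y1" "z2 \<in> V r" "f r q z2 = y2"
    using lift2[OF assms] by blast
  have "y1 + y2 = f r q (z1 + z2)" using fadd r by simp
  hence "psi q (y1 + y2) = f r p0 (z1 + z2)" using psi_eq r Vadd RP by simp
  also have "\<dots> = psi q y1 + psi q y2" using fadd r psi_eq by metis
  finally show ?thesis .
qed

lemma psi_sc: assumes "q \<in> P" "y \<in> V q" shows "psi q (sc c y) = sc c (psi q y)"
proof -
  obtain r z where r: "(r,p0) \<in> R" "(r,q) \<in> R" "z \<in> V r" "f r q z = y" using lift[OF assms] by blast
  have "sc c y = f r q (sc c z)" using fsc r by simp
  hence "psi q (sc c y) = f r p0 (sc c z)" using psi_eq r Vsc RP by simp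
  also have "\<dots> = sc c (psi q y)" using fsc r psi_eq by metis
  finally show ?thesis .
qed

lemma psi_compat: assumes "(q,q') \<in> R" "y \<in> V q" shows "psi q' (f q q' y) = psi q y"
proof -
  obtain r z where r: "(r,p0) \<in> R" "(r,q) \<in> R" "z \<in> V r" "f r q z = y" using lift RP assms by metis
  have "f q q' y = f r q' z" using fcomp[OF r(2) assms(1) r(3)] r by simp
  thus ?thesis using psi_eq r Rtrans assms by metis
qed

lemma psi_hit: assumes "q \<in> P" shows "\<exists>y\<in>V q. psi q y = v"
proof -
  obtain r where r: "(r,p0) \<in> R" "(r,q) \<in> R" using down[OF p0 assms(1)] by blast
  obtain z where "z \<in> V r" "f r p0 z = v" using fsurj[OF r(1) v] by blast
  thus ?thesis using psi_eq r fV by metis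
qed

definition phi where "phi q y = g (psi q y)"

lemma phi_add: "q \<in> P \<Longrightarrow> y1 \<in> V q \<Longrightarrow> y2 \<in> V q \<Longrightarrow> phi q (y1 + y2) = phi q y1 + phi q y2"
  unfolding phi_def by (simp add: psi_add gadd)
lemma phi_sc: "q \<in> P \<Longrightarrow> y \<in> V q \<Longrightarrow> phi q (sc c y) = c * phi q y"
  unfolding phi_def by (simp add: psi_sc gsc)
lemma phi_compat: "(q,q') \<in> R \<Longrightarrow> y \<in> V q \<Longrightarrow> phi q' (f q q' y) = phi q y"
  unfolding phi_def by (simp add: psi_compat)
lemma phi_0: "q \<in> P \<Longrightarrow> phi q 0 = 0"
  using phi_sc[of q 0 0] V0 by simp
lemma phi_diff: "q \<in> P \<Longrightarrow> y1 \<in> V q \<Longrightarrow> y2 \<in> V q \<Longrightarrow> phi q (y1 - y2) = phi q y1 - phi q y2"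
  using phi_add[of q "y1 - y2" y2] Vdiff by (simp add: algebra_simps)
lemma phi_hit: "q \<in> P \<Longrightarrow> \<exists>y\<in>V q. phi q y = 1"
  unfolding phi_def using psi_hit gv by metis

definition A where "A q = {y \<in> V q. phi q y = 1}"

definition good where "good S \<longleftrightarrow> (\<forall>p. p \<notin> P \<longrightarrow> S p = {}) \<and>
   (\<forall>p\<in>P. aff (S p) \<and> S p \<noteq> {} \<and> S p \<subseteq> A p) \<and> (\<forall>p q. (p,q) \<in> R \<longrightarrow> f p q ` S p = S q)"

lemma aff_A: "q \<in> P \<Longrightarrow> aff (A q)"
  unfolding aff_def A_def
  by (auto simp: Vadd Vsc Vdiff phi_add phi_sc phi_diff)

lemma fA: assumes "(p,q) \<in> R" shows "f p q ` A p = A q"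
proof
  show "f p q ` A p \<subseteq> A q" unfolding A_def using fV phi_compat assms by auto
  show "A q \<subseteq> f p q ` A p"
  proof
    fix y assume "y \<in> A q"
    then obtain z where "z \<in> V p" "f p q z = y" "phi q y = 1" using fsurj assms unfolding A_def by blast
    thus "y \<in> f p q ` A p" unfolding A_def using phi_compat assms by force
  qed
qed

lemma A_ne: "p \<in> P \<Longrightarrow> A p \<noteq> {}"
  using phi_hit unfolding A_def by blast

lemma good_A: "good (\<lambda>p. if p \<in> P then A p else {})"
  unfolding good_def using aff_A fA A_ne RP by auto

end



context L1 begin

lemma aff_Inter: "\<forall>S\<in>\<C>. aff S \<Longrightarrow> aff (\<Inter>\<C>)"
  unfolding aff_def by blast

lemma aff_fiber: assumes "(p,q) \<in> R" "aff S" "S \<subseteq> V p" shows "aff (S \<inter> {z. f p q z = y})"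
  unfolding aff_def
proof (intro ballI allI)
  fix x1 x2 x3 c assume x: "x1 \<in> S \<inter> {z. f p q z = y}" "x2 \<in> S \<inter> {z. f p q z = y}" "x3 \<in> S \<inter> {z. f p q z = y}"
  have "x1 + sc c (x2 - x3) \<in> S" using assms(2) x unfolding aff_def by blast
  moreover have "f p q (x1 + sc c (x2 - x3)) = f p q x1 + sc c (f p q x2 - f p q x3)"
    using flc[OF assms(1)] x assms(3) by blast
  moreover have "\<dots> = y" using x by simp
  ultimately show "x1 + sc c (x2 - x3) \<in> S \<inter> {z. f p q z = y}" by simp
qed

lemma good_V: "good S \<Longrightarrow> p \<in> P \<Longrightarrow> S p \<subseteq> V p"
  unfolding good_def A_def by blast

lemma chain_bound:
  assumes Cg: "\<And>a. a \<in> C \<Longrightarrow> good a"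
    and Cch: "\<And>a b. a \<in> C \<Longrightarrow> b \<in> C \<Longrightarrow> (\<forall>p. b p \<subseteq> a p) \<or> (\<forall>p. a p \<subseteq> b p)"
  shows "\<exists>u. good u \<and> (\<forall>a\<in>C. \<forall>p. u p \<subseteq> a p)"
proof (cases "C = {}")
  case True
  then show ?thesis using good_A by blast
next
  case False
  define u where "u p = (if p \<in> P then \<Inter>((\<lambda>S. S p) ` C) else {})" for p
  have ne: "u p \<noteq> {}" if p: "p \<in> P" for p
  proof -
    obtain B where B: "finite B" "span B = V p" using fin p by blast
    have "\<Inter>((\<lambda>S. S p) ` C) \<noteq> {}"
    proof (rule chain_inter[OF B(1)])
      show "(\<lambda>S. S p) ` C \<noteq> {}" using False by blast
      show "\<forall>S\<in>(\<lambda>S. S p) ` C. aff S \<and> S \<noteq> {} \<and> S \<subseteq> span B"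
      proof
        fix S assume "S \<in> (\<lambda>S. S p) ` C"
        then obtain a where a: "a \<in> C" "S = a p" by blast
        have "aff (a p) \<and> a p \<noteq> {}" using p Cg[OF a(1)] unfolding good_def by blast
        moreover have "a p \<subseteq> V p" using good_V[OF Cg[OF a(1)] p] .
        ultimately show "aff S \<and> S \<noteq> {} \<and> S \<subseteq> span B" using a B(2) by simp
      qed
      show "\<forall>S\<in>(\<lambda>S. S p) ` C. \<forall>T\<in>(\<lambda>S. S p) ` C. S \<subseteq> T \<or> T \<subseteq> S"
        using Cch by blast
    qed
    thus ?thesis using p u_def by simp
  qed
  have img: "f p q ` u p = u q" if pq: "(p,q) \<in> R" for p q
  proof
    have p: "p \<in> P" and q: "q \<in> P" using RP pq by auto
    show "f p q ` u p \<subseteq> u q"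
    proof
      fix y assume "y \<in> f p q ` u p"
      then obtain x where x: "x \<in> u p" "y = f p q x" by blast
      have "y \<in> a q" if a: "a \<in> C" for a
      proof -
        have "x \<in> a p" using x(1) a p unfolding u_def by simp
        moreover have "f p q ` a p = a q" using Cg[OF a] pq unfolding good_def by blast
        ultimately show ?thesis using x(2) by blast
      qed
      thus "y \<in> u q" using q unfolding u_def by simp
    qed
    show "u q \<subseteq> f p q ` u p"
    proof
      fix y assume y: "y \<in> u q"
      obtain B where B: "finite B" "span B = V p" using fin p by blast
      have "\<Inter>((\<lambda>S. S p \<inter> {z. f p q z = y}) ` C) \<noteq> {}"
      proof (rule chain_inter[OF B(1)])
        show "(\<lambda>S. S p \<inter> {z. f p q z = y}) ` C \<noteq> {}" using False by blast
        show "\<forall>S\<in>(\<lambda>S. S p \<inter> {z. f p q z = y}) ` C. \<forall>T\<in>(\<lambda>S. S p \<inter> {z. f p q z = y}) ` C. S \<subseteq> T \<or> T \<subseteq> S"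
          using Cch by blast
        show "\<forall>S\<in>(\<lambda>S. S p \<inter> {z. f p q z = y}) ` C. aff S \<and> S \<noteq> {} \<and> S \<subseteq> span B"
        proof
          fix S assume "S \<in> (\<lambda>S. S p \<inter> {z. f p q z = y}) ` C"
          then obtain a where a: "a \<in> C" "S = a p \<inter> {z. f p q z = y}" by blast
          have ga: "good a" using Cg a by blast
          have "y \<in> a q" using y a q unfolding u_def by auto
          hence "y \<in> f p q ` a p" using ga pq unfolding good_def by blast
          hence "S \<noteq> {}" using a by blast
          moreover have "aff (a p)" using ga p unfolding good_def by blast
          moreover have "aff S" using aff_fiber[OF pq calculation(2) good_V[OF ga p]] a(2) by simp
          moreover have "S \<subseteq> span B" using a good_V[OF ga p] B by blast
          ultimately show "aff S \<and> S \<noteq> {} \<and> S \<subseteq> span B" by blast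
        qed
      qed
      then obtain z where "z \<in> \<Inter>((\<lambda>S. S p \<inter> {z. f p q z = y}) ` C)" by blast
      hence "z \<in> u p" "f p q z = y" using p False unfolding u_def by auto
      thus "y \<in> f p q ` u p" by blast
    qed
  qed
  have "good u" unfolding good_def
  proof (intro conjI allI impI ballI)
    show "p \<notin> P \<Longrightarrow> u p = {}" for p using u_def by simp
    fix p assume p: "p \<in> P"
    have "aff (a p)" if "a \<in> C" for a using p Cg[OF that] unfolding good_def by blast
    thus "aff (u p)" using p unfolding u_def by (simp add: aff_Inter)
    show "u p \<noteq> {}" using ne p .
    obtain a0 where a0: "a0 \<in> C" using False by blast
    have "a0 p \<subseteq> A p" using p Cg[OF a0] unfolding good_def by blast
    thus "u p \<subseteq> A p" using p a0 unfolding u_def by auto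
  next
    fix p q assume "(p,q) \<in> R" thus "f p q ` u p = u q" using img by blast
  qed
  moreover have "\<forall>a\<in>C. \<forall>p. u p \<subseteq> a p" unfolding u_def by auto
  ultimately show ?thesis by blast
qed

lemma good_ext: "good S \<Longrightarrow> good T \<Longrightarrow> (\<forall>p. S p \<subseteq> T p) \<Longrightarrow> (\<forall>p. T p \<subseteq> S p) \<Longrightarrow> S = T"
  by (rule ext) blast

lemma min_good: "\<exists>m. good m \<and> (\<forall>S. good S \<and> (\<forall>p. S p \<subseteq> m p) \<longrightarrow> S = m)"
proof -
  let ?G = "{S. good S}"
  let ?Pr = "\<lambda>S T. \<forall>p. T p \<subseteq> S p"
  have po2: "partial_order_on ?G (relation_of ?Pr ?G)"
    unfolding partial_order_on_def preorder_on_def refl_on_def trans_def antisym_def relation_of_def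
    by (auto intro!: ext)
  have "\<exists>m\<in>?G. \<forall>a\<in>?G. ?Pr m a \<longrightarrow> a = m"
  proof (rule predicate_Zorn[OF po2])
    fix C assume C: "C \<in> Chains (relation_of ?Pr ?G)"
    have ch: "\<forall>a\<in>C. \<forall>b\<in>C. (a,b) \<in> relation_of ?Pr ?G \<or> (b,a) \<in> relation_of ?Pr ?G"
      using C by (simp add: Chains_def)
    have Cg: "good a" if "a \<in> C" for a
    proof -
      have "(a,a) \<in> relation_of ?Pr ?G" using ch that by blast
      thus ?thesis by (simp add: relation_of_def)
    qed
    have Cch: "(\<forall>p. b p \<subseteq> a p) \<or> (\<forall>p. a p \<subseteq> b p)" if "a \<in> C" "b \<in> C" for a b
    proof -
      have "(a,b) \<in> relation_of ?Pr ?G \<or> (b,a) \<in> relation_of ?Pr ?G" using ch that by blast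
      thus ?thesis unfolding relation_of_def by blast
    qed
    obtain u where "good u" "\<forall>a\<in>C. \<forall>p. u p \<subseteq> a p" using chain_bound[OF Cg Cch] by blast
    thus "\<exists>u\<in>?G. \<forall>a\<in>C. ?Pr a u" by blast
  qed
  thus ?thesis by blast
qed

end



context L1 begin

lemma sing:
  assumes gm: "good m" and mn: "\<forall>S. good S \<and> (\<forall>p. S p \<subseteq> m p) \<longrightarrow> S = m"
    and p: "p \<in> P" and a: "a \<in> m p"
  shows "m p = {a}"
proof -
  define T where "T q = (if q \<in> P then {f r q z | r z. (r,p) \<in> R \<and> (r,q) \<in> R \<and> z \<in> m r \<and> f r p z = a} else {})" for q
  have mV: "m r \<subseteq> V r" if "r \<in> P" for r using good_V[OF gm that] .
  have mimg: "f r q ` m r = m q" if "(r,q) \<in> R" for r q using gm that unfolding good_def by blast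
  have Tchar: "T q = {f r0 q z | z. z \<in> m r0 \<and> f r0 p z = a}" if r0: "(r0,p) \<in> R" "(r0,q) \<in> R" for r0 q
  proof
    have q: "q \<in> P" using RP r0 by blast
    show "{f r0 q z | z. z \<in> m r0 \<and> f r0 p z = a} \<subseteq> T q"
    proof
      fix y assume "y \<in> {f r0 q z | z. z \<in> m r0 \<and> f r0 p z = a}"
      then obtain z where "z \<in> m r0" "f r0 p z = a" "y = f r0 q z" by blast
      thus "y \<in> T q" unfolding T_def if_P[OF q] using r0 by blast
    qed
    show "T q \<subseteq> {f r0 q z | z. z \<in> m r0 \<and> f r0 p z = a}"
    proof
      fix y assume "y \<in> T q"
      hence "y \<in> {f r q z | r z. (r,p) \<in> R \<and> (r,q) \<in> R \<and> z \<in> m r \<and> f r p z = a}"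
        unfolding T_def if_P[OF q] .
      then obtain r z where rz: "(r,p) \<in> R" "(r,q) \<in> R" "z \<in> m r" "f r p z = a" "y = f r q z"
        by blast
      have rP: "r \<in> P" using RP(1)[OF rz(1)] .
      have r0P: "r0 \<in> P" using RP(1)[OF r0(1)] .
      obtain s where s: "(s,r) \<in> R" "(s,r0) \<in> R" using down[OF rP r0P] by blast
      have "z \<in> f s r ` m s" using mimg[OF s(1)] rz(3) by simp
      then obtain z' where z': "z' \<in> m s" "f s r z' = z" by (auto elim!: imageE)
      have sP: "s \<in> P" using RP(1)[OF s(1)] .
      have z'V: "z' \<in> V s" using mV[OF sP] z'(1) by blast
      define w where "w = f s r0 z'"
      have "w \<in> m r0" using mimg[OF s(2)] z'(1) unfolding w_def by blast
      moreover have "f r0 p w = a"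
      proof -
        have "f r0 p w = f s p z'" unfolding w_def using fcomp[OF s(2) r0(1) z'V] .
        also have "\<dots> = f r p (f s r z')" using fcomp[OF s(1) rz(1) z'V] by simp
        finally show ?thesis using z'(2) rz(4) by simp
      qed
      moreover have "f r0 q w = y"
      proof -
        have "f r0 q w = f s q z'" unfolding w_def using fcomp[OF s(2) r0(2) z'V] .
        also have "\<dots> = f r q (f s r z')" using fcomp[OF s(1) rz(2) z'V] by simp
        finally show ?thesis using z'(2) rz(5) by simp
      qed
      ultimately show "y \<in> {f r0 q z | z. z \<in> m r0 \<and> f r0 p z = a}" by blast
    qed
  qed
  have Tsub: "T q \<subseteq> m q" for q
  proof (cases "q \<in> P")
    case True
    show ?thesis
    proof
      fix y assume "y \<in> T q"
      hence "y \<in> {f r q z | r z. (r,p) \<in> R \<and> (r,q) \<in> R \<and> z \<in> m r \<and> f r p z = a}"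
        unfolding T_def using True by simp
      then obtain r z where rz: "(r,q) \<in> R" "z \<in> m r" "y = f r q z" by blast
      thus "y \<in> m q" using mimg[OF rz(1)] by blast
    qed
  qed (simp add: T_def)
  have gT: "good T" unfolding good_def
  proof (intro conjI allI impI ballI)
    show "q \<notin> P \<Longrightarrow> T q = {}" for q unfolding T_def by simp
    fix q assume q: "q \<in> P"
    obtain r0 where r0: "(r0,p) \<in> R" "(r0,q) \<in> R" using down[OF p q] by blast
    have TT: "T q = {f r0 q z | z. z \<in> m r0 \<and> f r0 p z = a}" using Tchar[OF r0] .
    have r0P: "r0 \<in> P" using RP r0 by blast
    have "a \<in> f r0 p ` m r0" using mimg[OF r0(1)] a by simp
    then obtain z where "z \<in> m r0" "f r0 p z = a" by (auto elim!: imageE)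
    hence "f r0 q z \<in> T q" unfolding TT by blast
    thus "T q \<noteq> {}" by blast
    have "m q \<subseteq> A q" using gm q unfolding good_def by blast
    thus "T q \<subseteq> A q" using Tsub[of q] by blast
    show "aff (T q)" unfolding aff_def
    proof (intro ballI allI)
      fix x y z c assume xT: "x \<in> T q" and yT: "y \<in> T q" and zT: "z \<in> T q"
      obtain z1 where z1: "z1 \<in> m r0" "f r0 p z1 = a" "x = f r0 q z1" using xT unfolding TT by blast
      obtain z2 where z2: "z2 \<in> m r0" "f r0 p z2 = a" "y = f r0 q z2" using yT unfolding TT by blast
      obtain z3 where z3: "z3 \<in> m r0" "f r0 p z3 = a" "z = f r0 q z3" using zT unfolding TT by blast
      have mr0: "m r0 \<subseteq> V r0" using mV[OF r0P] .
      have zV: "z1 \<in> V r0" "z2 \<in> V r0" "z3 \<in> V r0" using z1(1) z2(1) z3(1) mr0 by auto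
      have "aff (m r0)" using gm r0P unfolding good_def by blast
      hence "z1 + sc c (z2 - z3) \<in> m r0" using z1(1) z2(1) z3(1) unfolding aff_def by blast
      moreover have "f r0 p (z1 + sc c (z2 - z3)) = a" using flc[OF r0(1) zV] z1 z2 z3 by simp
      moreover have "f r0 q (z1 + sc c (z2 - z3)) = x + sc c (y - z)" using flc[OF r0(2) zV] z1 z2 z3 by simp
      ultimately have "\<exists>w. x + sc c (y - z) = f r0 q w \<and> w \<in> m r0 \<and> f r0 p w = a" by metis
      thus "x + sc c (y - z) \<in> T q" unfolding TT by blast
    qed
  next
    fix q q' assume qq: "(q,q') \<in> R"
    have q: "q \<in> P" using RP qq by blast
    obtain r0 where r0: "(r0,p) \<in> R" "(r0,q) \<in> R" using down[OF p q] by blast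
    have r0': "(r0,q') \<in> R" using Rtrans r0(2) qq by blast
    have r0P: "r0 \<in> P" using RP r0 by blast
    have e: "f q q' (f r0 q z) = f r0 q' z" if "z \<in> m r0" for z using fcomp[OF r0(2) qq] mV[OF r0P] that by blast
    show "f q q' ` T q = T q'"
    proof
      show "f q q' ` T q \<subseteq> T q'"
      proof
        fix y assume "y \<in> f q q' ` T q"
        then obtain x where x: "x \<in> T q" "y = f q q' x" by blast
        then obtain z where "z \<in> m r0" "f r0 p z = a" "x = f r0 q z" unfolding Tchar[OF r0] by blast
        thus "y \<in> T q'" unfolding Tchar[OF r0(1) r0'] using e x(2) by auto
      qed
      show "T q' \<subseteq> f q q' ` T q"
      proof
        fix y assume "y \<in> T q'"
        then obtain z where z: "z \<in> m r0" "f r0 p z = a" "y = f r0 q' z" unfolding Tchar[OF r0(1) r0'] by blast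
        hence "f r0 q z \<in> T q" unfolding Tchar[OF r0] by blast
        moreover have "y = f q q' (f r0 q z)" using e z by simp
        ultimately show "y \<in> f q q' ` T q" by blast
      qed
    qed
  qed
  have "good T \<and> (\<forall>q. T q \<subseteq> m q)" using gT Tsub by blast
  hence "T = m" using mn by (rule_tac mp[OF spec[OF mn, of T]])
  moreover have "T p = {a}"
  proof -
    have "T p = {f p p z | z. z \<in> m p \<and> f p p z = a}" using Tchar[OF Rrefl[OF p] Rrefl[OF p]] .
    also have "\<dots> = {a}"
    proof -
      have fa: "f p p a = a" using fid p mV a by blast
      have w: "a = f p p a \<and> a \<in> m p \<and> f p p a = a" using fa a by simp
      show ?thesis
      proof
        show "{f p p z | z. z \<in> m p \<and> f p p z = a} \<subseteq> {a}" by auto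
        show "{a} \<subseteq> {f p p z | z. z \<in> m p \<and> f p p z = a}" using w by blast
      qed
    qed
    finally show ?thesis .
  qed
  ultimately show ?thesis by simp
qed

lemma sect: "\<exists>x. (\<forall>p\<in>P. x p \<in> A p) \<and> (\<forall>p q. (p,q) \<in> R \<longrightarrow> f p q (x p) = x q)"
proof -
  obtain m where gm: "good m" and mn: "\<forall>S. good S \<and> (\<forall>p. S p \<subseteq> m p) \<longrightarrow> S = m"
    using min_good by blast
  define x where "x p = (SOME a. a \<in> m p)" for p
  have xm: "x p \<in> m p" if "p \<in> P" for p
    using gm that unfolding good_def x_def by (metis all_not_in_conv someI_ex)
  have ms: "m p = {x p}" if "p \<in> P" for p using sing[OF gm mn that xm[OF that]] .
  show ?thesis
  proof (intro exI conjI ballI allI impI)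
    fix p assume "p \<in> P" thus "x p \<in> A p" using xm gm unfolding good_def by blast
  next
    fix p q assume pq: "(p,q) \<in> R"
    have "f p q (x p) \<in> m q" using gm pq xm RP unfolding good_def by blast
    thus "f p q (x p) = x q" using ms RP pq by blast
  qed
qed

end



context L1 begin

lemma summand: "has_kP_summand P R sc V f"
proof -
  obtain x where xA: "\<forall>p\<in>P. x p \<in> A p" and xc: "\<forall>p q. (p,q) \<in> R \<longrightarrow> f p q (x p) = x q"
    using sect by blast
  have xV: "x p \<in> V p" if "p \<in> P" for p using xA that unfolding A_def by blast
  have xphi: "phi p (x p) = 1" if "p \<in> P" for p using xA that unfolding A_def by blast
  have xnz: "x p \<noteq> 0" if "p \<in> P" for p using xphi[OF that] phi_0[OF that] by force
  define N where "N p = {sc c (x p) | c. True}" for p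
  define C where "C p = {y \<in> V p. phi p y = 0}" for p
  have subN: "is_submod P R sc V f N" unfolding is_submod_def
  proof (intro conjI ballI impI)
    fix p assume p: "p \<in> P"
    show "subspace (N p)"
    proof (rule subspaceI)
      show "0 \<in> N p" unfolding N_def by (auto intro!: exI[of _ 0])
      fix y z assume "y \<in> N p" "z \<in> N p"
      then obtain a b where "y = sc a (x p)" "z = sc b (x p)" unfolding N_def by blast
      hence "y + z = sc (a + b) (x p)" by (simp add: scale_left_distrib)
      thus "y + z \<in> N p" unfolding N_def by blast
    next
      fix c y assume "y \<in> N p"
      then obtain a where "y = sc a (x p)" unfolding N_def by blast
      hence "sc c y = sc (c * a) (x p)" by simp
      thus "sc c y \<in> N p" unfolding N_def by blast
    qed
    show "N p \<subseteq> V p" unfolding N_def using Vsc[OF p xV[OF p]] by blast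
  next
    fix p q y assume "p \<in> P" "q \<in> P" and pq: "(p,q) \<in> R" and "y \<in> N p"
    show "f p q y \<in> N q"
    proof -
      from \<open>y \<in> N p\<close> obtain a where "y = sc a (x p)" unfolding N_def by blast
      hence "f p q y = sc a (x q)" using fsc[OF pq xV[OF RP(1)[OF pq]]] xc pq by simp
      thus "f p q y \<in> N q" unfolding N_def by blast
    qed
  qed
  have subC: "is_submod P R sc V f C" unfolding is_submod_def
  proof (intro conjI ballI impI)
    fix p assume p: "p \<in> P"
    show "subspace (C p)"
      by (rule subspaceI) (auto simp: C_def p V0 phi_0 Vadd phi_add Vsc phi_sc)
    show "C p \<subseteq> V p" unfolding C_def by blast
  next
    fix p q y assume "p \<in> P" "q \<in> P" and pq: "(p,q) \<in> R" and "y \<in> C p"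
    thus "f p q y \<in> C q"
      unfolding C_def using fV[OF pq] phi_compat[OF pq] by auto
  qed
  have dsum: "N p \<inter> C p = {0} \<and> V p = {y + z | y z. y \<in> N p \<and> z \<in> C p}" if p: "p \<in> P" for p
  proof
    show "N p \<inter> C p = {0}"
    proof
      show "N p \<inter> C p \<subseteq> {0}"
      proof
        fix y assume y: "y \<in> N p \<inter> C p"
        then obtain a where a: "y = sc a (x p)" unfolding N_def by blast
        have "phi p y = 0" using y unfolding C_def by blast
        moreover have "phi p y = a" using a phi_sc[OF p xV[OF p]] xphi[OF p] by simp
        ultimately show "y \<in> {0}" using a by simp
      qed
      have "0 \<in> N p" unfolding N_def by (auto intro!: exI[of _ 0])
      moreover have "0 \<in> C p" unfolding C_def using V0[OF p] phi_0[OF p] by simp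
      ultimately show "{0} \<subseteq> N p \<inter> C p" by blast
    qed
    show "V p = {y + z | y z. y \<in> N p \<and> z \<in> C p}"
    proof
      show "V p \<subseteq> {y + z | y z. y \<in> N p \<and> z \<in> C p}"
      proof
        fix w assume w: "w \<in> V p"
        define y where "y = sc (phi p w) (x p)"
        have yN: "y \<in> N p" unfolding y_def N_def by blast
        have yV: "y \<in> V p" unfolding y_def using Vsc[OF p xV[OF p]] .
        have "phi p y = phi p w" unfolding y_def using phi_sc[OF p xV[OF p]] xphi[OF p] by simp
        hence "phi p (w - y) = 0" using phi_diff[OF p w yV] by simp
        hence "w - y \<in> C p" unfolding C_def using Vdiff[OF p w yV] by blast
        moreover have "w = y + (w - y)" by simp
        ultimately show "w \<in> {y + z | y z. y \<in> N p \<and> z \<in> C p}" using yN by blast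
      qed
      show "{y + z | y z. y \<in> N p \<and> z \<in> C p} \<subseteq> V p"
        using subN subC p Vadd unfolding is_submod_def by blast
    qed
  qed
  have iso: "pmod_iso P R (*) kP_space kP_map sc N f" unfolding pmod_iso_def
  proof (intro exI[of _ "\<lambda>p c. sc c (x p)"] conjI ballI allI impI)
    fix p assume p: "p \<in> P"
    show "bij_betw (\<lambda>c. sc c (x p)) (kP_space p) (N p)"
      unfolding bij_betw_def kP_space_def N_def inj_on_def using xnz[OF p] by auto
    fix a b
    show "sc (a + b) (x p) = sc a (x p) + sc b (x p)" by (simp add: scale_left_distrib)
    show "sc (a * b) (x p) = sc a (sc b (x p))" by simp
  next
    fix p q a assume pq: "(p,q) \<in> R"
    show "sc (kP_map p q a) (x q) = f p q (sc a (x p))"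
      unfolding kP_map_def using fsc[OF pq xV[OF RP(1)[OF pq]]] xc pq by simp
  qed
  show ?thesis unfolding has_kP_summand_def using subN subC dsum iso by blast
qed

end



theorem lemma2p3:
  fixes P :: "'p set" and R :: "'p rel"
    and sc :: "'k::field \<Rightarrow> 'v::ab_group_add \<Rightarrow> 'v"
    and V :: "'p \<Rightarrow> 'v set" and f :: "'p \<Rightarrow> 'p \<Rightarrow> 'v \<Rightarrow> 'v"
  assumes "partial_order_on P R"
    and "directed_on P R" and "codirected_on P R"
    and "vector_space sc"
    and "is_pmod P R sc V f"
    and "pfd P sc V"
    and "\<forall>p\<in>P. V p \<noteq> {0}"
    and "\<forall>p\<in>P. \<forall>q\<in>P. (p, q) \<in> R \<longrightarrow> f p q ` V p = V q"
  shows "has_kP_summand P R sc V f"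
proof (cases "P = {}")
  case True
  show ?thesis unfolding has_kP_summand_def is_submod_def pmod_iso_def using True by auto
next
  case False
  interpret L: L sc P R V f using assms by (simp add: L_def L_axioms_def)
  obtain pb where "pb \<in> P" using False by blast
  then obtain p0 where p0: "p0 \<in> P" "\<forall>s. (p0,s) \<in> R \<longrightarrow> (\<forall>y\<in>V p0. f p0 s y = 0 \<longrightarrow> y = 0)"
    using L.exists_p0 by blast
  obtain v where v: "v \<in> V p0" "v \<noteq> 0" using assms(7) p0(1) L.V0 by blast
  have vsk: "vector_space ((*) :: 'k \<Rightarrow> 'k \<Rightarrow> 'k)"
    by unfold_locales (auto simp: algebra_simps)
  interpret VP: vector_space_pair sc "(*) :: 'k \<Rightarrow> 'k \<Rightarrow> 'k"
    using assms(4) vsk by (simp add: vector_space_pair_def)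
  have "L.independent {v}" using v(2) by simp
  then obtain g where g: "Vector_Spaces.linear sc ((*) :: 'k \<Rightarrow> 'k \<Rightarrow> 'k) g" "\<forall>x\<in>{v}. g x = (\<lambda>_. 1) x"
    using VP.linear_independent_extend[of "{v}" "\<lambda>_. 1"] by blast
  have gadd: "\<And>x y. g (x + y) = g x + g y" and gsc: "\<And>c x. g (sc c x) = c * g x"
    using g(1) unfolding Vector_Spaces.linear_iff by auto
  interpret L1: L1 sc P R V f p0 g v
    by (unfold_locales) (use p0 v g gadd gsc in auto)
  show ?thesis using L1.summand .
qed


end
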